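(* Fix $d\ge1$ and $n\ge1$. Let $\mathcal{P}'_d(n)\subset\mathcal{P}'_d\times\mathbb{C}^{nd}$ be the affine variety defined below, and let $\mathcal{P}^{(0)}_d(n)\subset\mathbb{C}^{nd}$ be its fiber over the polynomial $p=Z^d$. Then the projection $\mathcal{P}'_d(n)\to\mathcal{P}'_d$ is a finite morphism if and only if $\mathcal{P}^{(0)}_d(n)=\{0\}$.
   Context: $\mathcal{P}'_d$ denotes the space of monic degree-$d$ polynomials $p=Z^d+a_{d-1}Z^{d-1}+\dots+a_0$, identified with $\mathbb{C}^d$ via $(a_0,\dots,a_{d-1})$. Using $nd$ variables grouped as vectors $\underline z^{(k)}=(z^{(k)}_1,\dots,z^{(k)}_d)$, $0\le k<n$ (indices $k$ taken mod $n$), $\mathcal{P}'_d(n)$ is the subvariety of $\mathcal{P}'_d\times\mathbb{C}^{nd}$ defined by the equations obtained by comparing coefficients of powers of $Z$ in $$\sum_{m=1}^d (z^{(k+1)}_m-z^{(k)}_m)\prod_{j\ne m}(Z-z^{(k)}_j)=\prod_{m=1}^d(Z-z^{(k)}_m)-p(Z),\qquad k=0,\dots,n-1.$$ (These equations encode $\underline z^{(0)}\mapsto\underline z^{(1)}\mapsto\dots\mapsto\underline z^{(n-1)}\mapsto\underline z^{(0)}$ under the Weierstrass map $W_p$, where for monic $p$, $W_p(\underline z)_k=z_k-p(z_k)/\prod_{j\ne k}(z_k-z_j)$.) *)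

theory Defs
  imports Complex_Main "HOL-Computational_Algebra.Polynomial"
begin

inductive_set polyfun :: "('x \<Rightarrow> complex) set \<Rightarrow> ('x \<Rightarrow> complex) set"
  for C :: "('x \<Rightarrow> complex) set" where
  pf_const: "(\<lambda>_. c) \<in> polyfun C"
| pf_coord: "f \<in> C \<Longrightarrow> f \<in> polyfun C"
| pf_add: "f \<in> polyfun C \<Longrightarrow> g \<in> polyfun C \<Longrightarrow> (\<lambda>x. f x + g x) \<in> polyfun C"
| pf_mult: "f \<in> polyfun C \<Longrightarrow> g \<in> polyfun C \<Longrightarrow> (\<lambda>x. f x * g x) \<in> polyfun C"

text \<open>Coordinates of the base space P'_d = C^d: coefficients a_0,...,a_{d-1}
  (points are functions nat => complex, coefficients of index >= d being 0).\<close>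
definition base_coords :: "((nat \<Rightarrow> complex) \<Rightarrow> complex) set" where
  "base_coords = range (\<lambda>i a. a i)"

text \<open>Coordinates of the ambient space P'_d x C^{nd}: points are pairs (a, z),
  z k m standing for z^{(k)}_{m+1}.\<close>
definition total_coords :: "((nat \<Rightarrow> complex) \<times> (nat \<Rightarrow> nat \<Rightarrow> complex) \<Rightarrow> complex) set" where
  "total_coords = range (\<lambda>i x. fst x i) \<union> {(\<lambda>x. snd x k m) | k m. True}"

definition monic_poly :: "nat \<Rightarrow> (nat \<Rightarrow> complex) \<Rightarrow> complex poly" where
  "monic_poly d a = monom 1 d + (\<Sum>i<d. monom (a i) i)"

text \<open>The variety P'_d(n) (entries outside the index ranges are forced to be 0).\<close>
definition Pd_n :: "nat \<Rightarrow> nat \<Rightarrow> ((nat \<Rightarrow> complex) \<times> (nat \<Rightarrow> nat \<Rightarrow> complex)) set" where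
  "Pd_n d n = {(a, z).
     (\<forall>i\<ge>d. a i = 0) \<and> (\<forall>k m. (n \<le> k \<or> d \<le> m) \<longrightarrow> z k m = 0) \<and>
     (\<forall>k<n. (\<Sum>m<d. smult (z ((k + 1) mod n) m - z k m)
                         (\<Prod>j\<in>{..<d} - {m}. [:- z k j, 1:]))
            = (\<Prod>m<d. [:- z k m, 1:]) - monic_poly d a)}"

text \<open>Fiber of P'_d(n) over p = Z^d (i.e. all a_i = 0), as a subset of C^{nd}.\<close>
definition Pd0_n :: "nat \<Rightarrow> nat \<Rightarrow> (nat \<Rightarrow> nat \<Rightarrow> complex) set" where
  "Pd0_n d n = {z. ((\<lambda>_. 0), z) \<in> Pd_n d n}"

text \<open>The projection (a,z) |-> a, restricted to V = P'_d(n), is a finite morphism: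
  the coordinate ring C[V] (polynomial functions restricted to V) is a finitely
  generated module over the pulled-back ring C[a_0,...,a_{d-1}].\<close>
definition finite_projection :: "((nat \<Rightarrow> complex) \<times> (nat \<Rightarrow> nat \<Rightarrow> complex)) set \<Rightarrow> bool" where
  "finite_projection V \<longleftrightarrow>
     (\<exists>G. finite G \<and> G \<subseteq> polyfun total_coords \<and>
        (\<forall>f\<in>polyfun total_coords. \<exists>h. (\<forall>g\<in>G. h g \<in> polyfun base_coords) \<and>
           (\<forall>x\<in>V. f x = (\<Sum>g\<in>G. h g (fst x) * g x))))"

end

theory Submission
  imports Defs "HOL-Library.Countable" "HOL-Analysis.Continuum_Not_Denumerable" "HOL-Computational_Algebra.Fundamental_Theorem_Algebra"
begin

lemma pf_sum: "finite S \<Longrightarrow> (\<And>i. i \<in> S \<Longrightarrow> f i \<in> polyfun C) \<Longrightarrow> (\<lambda>x. \<Sum>i\<in>S. f i x) \<in> polyfun C"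
proof (induction S rule: finite_induct)
  case empty then show ?case using pf_const[of 0] by simp
next
  case (insert a F)
  have "(\<lambda>x. f a x + (\<Sum>i\<in>F. f i x)) \<in> polyfun C"
    using insert by (intro pf_add) auto
  then show ?case using insert by simp
qed

lemma pf_prod: "finite S \<Longrightarrow> (\<And>i. i \<in> S \<Longrightarrow> f i \<in> polyfun C) \<Longrightarrow> (\<lambda>x. \<Prod>i\<in>S. f i x) \<in> polyfun C"
proof (induction S rule: finite_induct)
  case empty then show ?case using pf_const[of 1] by simp
next
  case (insert a F)
  have "(\<lambda>x. f a x * (\<Prod>i\<in>F. f i x)) \<in> polyfun C"
    using insert by (intro pf_mult) auto
  then show ?case using insert by simp
qed

lemma pf_sum_list: "(\<And>y. y \<in> set L \<Longrightarrow> f y \<in> polyfun C) \<Longrightarrow> (\<lambda>x. \<Sum>y\<leftarrow>L. f y x) \<in> polyfun C"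
proof (induction L)
  case Nil then show ?case using pf_const[of 0] by simp
next
  case (Cons a L)
  then show ?case using pf_add[of "f a" C "\<lambda>x. \<Sum>y\<leftarrow>L. f y x"] by simp
qed

lemma pf_prod_list: "(\<And>y. y \<in> set L \<Longrightarrow> f y \<in> polyfun C) \<Longrightarrow> (\<lambda>x. \<Prod>y\<leftarrow>L. f y x) \<in> polyfun C"
proof (induction L)
  case Nil then show ?case using pf_const[of 1] by simp
next
  case (Cons a L)
  then show ?case using pf_mult[of "f a" C "\<lambda>x. \<Prod>y\<leftarrow>L. f y x"] by simp
qed

lemma pf_cmult: "f \<in> polyfun C \<Longrightarrow> (\<lambda>x. c * f x) \<in> polyfun C"
  using pf_mult[OF pf_const] by blast

lemma pf_diff: "f \<in> polyfun C \<Longrightarrow> g \<in> polyfun C \<Longrightarrow> (\<lambda>x. f x - g x) \<in> polyfun C"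
proof -
  assume "f \<in> polyfun C" "g \<in> polyfun C"
  then have "(\<lambda>x. f x + (-1) * g x) \<in> polyfun C" by (intro pf_add pf_cmult)
  then show ?thesis by simp
qed

lemma pf_power: "f \<in> polyfun C \<Longrightarrow> (\<lambda>x. f x ^ k) \<in> polyfun C"
  by (induction k) (auto intro: pf_mult pf_const)

lemma pf_poly: "f \<in> polyfun C \<Longrightarrow> (\<lambda>x. poly P (f x)) \<in> polyfun C"
proof (induction P)
  case 0 then show ?case using pf_const[of 0] by simp
next
  case (pCons a P)
  have "(\<lambda>x. a + f x * poly P (f x)) \<in> polyfun C"
    using pCons by (intro pf_add pf_const pf_mult) auto
  then show ?case by simp
qed

section \<open>Linear algebra: more vectors than coordinates are dependent\<close>

lemma lin_dep:
  fixes B :: "'a \<Rightarrow> 'b \<Rightarrow> 'c::field"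
  assumes "finite S" "finite T" "card S < card T"
  shows "\<exists>l. (\<exists>j\<in>T. l j \<noteq> 0) \<and> (\<forall>g\<in>S. (\<Sum>j\<in>T. l j * B j g) = 0)"
  using assms
proof (induction S arbitrary: T B rule: finite_induct)
  case empty
  then obtain j0 where "j0 \<in> T" by fastforce
  then show ?case by (intro exI[of _ "\<lambda>_. 1"]) auto
next
  case (insert g S)
  show ?case
  proof (cases "\<forall>j\<in>T. B j g = 0")
    case True
    have "card S < card T" using insert.prems insert.hyps by simp
    from insert.IH[OF insert.prems(1) this]
    obtain l where l: "\<exists>j\<in>T. l j \<noteq> 0" "\<forall>g\<in>S. (\<Sum>j\<in>T. l j * B j g) = 0"
      by blast
    then show ?thesis using True by (intro exI[of _ l]) auto
  next
    case False
    then obtain j0 where j0: "j0 \<in> T" "B j0 g \<noteq> 0" by auto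
    define T' where "T' = T - {j0}"
    define B' where "B' = (\<lambda>j h. B j h - (B j g / B j0 g) * B j0 h)"
    have fT': "finite T'" using insert.prems unfolding T'_def by auto
    have cT: "card T = Suc (card T')" using j0 insert.prems unfolding T'_def
      by (simp add: card_Suc_Diff1)
    have "card S < card T'" using insert.prems insert.hyps cT by simp
    from insert.IH[OF fT' this, of B'] obtain l' where
      l': "\<exists>j\<in>T'. l' j \<noteq> 0" "\<forall>h\<in>S. (\<Sum>j\<in>T'. l' j * B' j h) = 0" by blast
    define l where "l = (\<lambda>j. if j = j0 then - (\<Sum>j\<in>T'. l' j * B j g) / B j0 g else l' j)"
    have Tsplit: "\<And>F. (\<Sum>j\<in>T. F j) = F j0 + (\<Sum>j\<in>T'. F j)"
      using j0 insert.prems unfolding T'_def by (simp add: sum.remove)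
    have lT': "\<And>F. (\<Sum>j\<in>T'. l j * F j) = (\<Sum>j\<in>T'. l' j * F j)"
      unfolding l_def T'_def by (rule sum.cong) auto
    have col_g: "(\<Sum>j\<in>T. l j * B j g) = 0"
      unfolding Tsplit lT' using j0 by (simp add: l_def)
    have col_h: "(\<Sum>j\<in>T. l j * B j h) = 0" if h: "h \<in> S" for h
    proof -
      have "(\<Sum>j\<in>T'. l' j * B j h) = (\<Sum>j\<in>T'. l' j * B' j h + l' j * B j g / B j0 g * B j0 h)"
        by (rule sum.cong) (simp_all add: B'_def right_diff_distrib)
      also have "\<dots> = (\<Sum>j\<in>T'. l' j * B' j h) + (\<Sum>j\<in>T'. l' j * B j g) / B j0 g * B j0 h"
        by (simp add: sum.distrib sum_distrib_right sum_divide_distrib)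
      finally have "(\<Sum>j\<in>T'. l' j * B j h) = (\<Sum>j\<in>T'. l' j * B' j h) + (\<Sum>j\<in>T'. l' j * B j g) / B j0 g * B j0 h" .
      then have "(\<Sum>j\<in>T'. l' j * B j h) = (\<Sum>j\<in>T'. l' j * B j g) / B j0 g * B j0 h"
        using l'(2) h by simp
      then show ?thesis unfolding Tsplit lT' by (simp add: l_def)
    qed
    have "\<exists>j\<in>T. l j \<noteq> 0" using l'(1) unfolding l_def T'_def by auto
    then show ?thesis using col_g col_h by (intro exI[of _ l]) auto
  qed
qed

type_synonym pt = "(nat \<Rightarrow> complex) \<times> (nat \<Rightarrow> nat \<Rightarrow> complex)"
type_synonym var = "nat + nat \<times> nat"

abbreviation AA :: "(pt \<Rightarrow> complex) set" where "AA \<equiv> polyfun total_coords"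

definition val :: "pt \<Rightarrow> var \<Rightarrow> complex" where
  "val x v = (case v of Inl i \<Rightarrow> fst x i | Inr km \<Rightarrow> snd x (fst km) (snd km))"

lemma val_simps[simp]: "val x (Inl i) = fst x i" "val x (Inr (k,m)) = snd x k m"
  by (auto simp: val_def)

lemma total_coords_eq: "total_coords = range (\<lambda>v x. val x v)"
proof
  show "total_coords \<subseteq> range (\<lambda>v x. val x v)"
  proof
    fix f assume "f \<in> total_coords"
    then consider i where "f = (\<lambda>x. fst x i)" | k m where "f = (\<lambda>x. snd x k m)"
      unfolding total_coords_def by blast
    then show "f \<in> range (\<lambda>v x. val x v)"
    proof cases
      case 1 then show ?thesis by (intro image_eqI[of _ _ "Inl i"]) auto
    next
      case 2 then show ?thesis by (intro image_eqI[of _ _ "Inr (k,m)"]) auto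
    qed
  qed
next
  show "range (\<lambda>v x. val x v) \<subseteq> total_coords"
  proof
    fix f assume "f \<in> range (\<lambda>v x. val x v)"
    then obtain v where f: "f = (\<lambda>x. val x v)" by auto
    show "f \<in> total_coords"
    proof (cases v)
      case (Inl i) then show ?thesis using f unfolding total_coords_def by auto
    next
      case (Inr km) then obtain k m where "v = Inr (k,m)" by (cases km) auto
      then show ?thesis using f unfolding total_coords_def by auto
    qed
  qed
qed

lemma pf_val: "(\<lambda>x. val x v) \<in> AA"
  by (rule pf_coord) (auto simp: total_coords_eq)

definition mon :: "var list \<Rightarrow> pt \<Rightarrow> complex" where
  "mon L x = (\<Prod>v\<leftarrow>L. val x v)"

definition ev :: "(complex \<times> var list) list \<Rightarrow> pt \<Rightarrow> complex" where
  "ev R x = (\<Sum>p\<leftarrow>R. fst p * mon (snd p) x)"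

lemma mon_append: "mon (L1 @ L2) x = mon L1 x * mon L2 x"
  by (simp add: mon_def)

lemma pf_mon: "mon L \<in> AA"
  unfolding mon_def[abs_def] by (rule pf_prod_list) (rule pf_val)

lemma pf_ev: "ev R \<in> AA"
  unfolding ev_def[abs_def] by (rule pf_sum_list) (intro pf_cmult pf_mon)

lemma ev_append: "ev (R1 @ R2) x = ev R1 x + ev R2 x"
  by (simp add: ev_def)

lemma ev_map_mult: "ev (map (\<lambda>q. (a * fst q, L @ snd q)) R2) x = a * mon L x * ev R2 x"
  by (induction R2) (auto simp: ev_def mon_append algebra_simps)

lemma ev_prod: "ev (concat (map (\<lambda>p. map (\<lambda>q. (fst p * fst q, snd p @ snd q)) R2) R1)) x = ev R1 x * ev R2 x"
  by (induction R1) (auto simp: ev_append ev_map_mult, auto simp: ev_def algebra_simps)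

lemma rep: "f \<in> AA \<Longrightarrow> \<exists>R. f = ev R"
proof (induction rule: polyfun.induct)
  case (pf_const c)
  then show ?case by (intro exI[of _ "[(c,[])]"]) (auto simp: ev_def mon_def)
next
  case (pf_coord f)
  then obtain v where "f = (\<lambda>x. val x v)" by (auto simp: total_coords_eq)
  then show ?case by (intro exI[of _ "[(1,[v])]"]) (auto simp: ev_def mon_def)
next
  case (pf_add f g)
  then obtain R1 R2 where "f = ev R1" "g = ev R2" by blast
  then show ?case by (intro exI[of _ "R1 @ R2"]) (auto simp: ev_append)
next
  case (pf_mult f g)
  then obtain R1 R2 where "f = ev R1" "g = ev R2" by blast
  then show ?case
    by (intro exI[of _ "concat (map (\<lambda>p. map (\<lambda>q. (fst p * fst q, snd p @ snd q)) R2) R1)"])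
       (auto simp: ev_prod)
qed

section \<open>Weighted scaling\<close>

definition sc :: "nat \<Rightarrow> complex \<Rightarrow> pt \<Rightarrow> pt" where
  "sc d t x = (\<lambda>i. t ^ (d - i) * fst x i, \<lambda>k m. t * snd x k m)"

definition wt :: "nat \<Rightarrow> var \<Rightarrow> nat" where
  "wt d v = (case v of Inl i \<Rightarrow> d - i | Inr _ \<Rightarrow> 1)"

definition wtl :: "nat \<Rightarrow> var list \<Rightarrow> nat" where
  "wtl d L = sum_list (map (wt d) L)"

lemma val_sc: "val (sc d t x) v = t ^ wt d v * val x v"
  by (cases v) (auto simp: sc_def wt_def val_def)

lemma mon_sc: "mon L (sc d t x) = t ^ wtl d L * mon L x"
  by (induction L) (auto simp: mon_def wtl_def val_sc power_add)

section \<open>The defining polynomial identity\<close>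

definition E :: "nat \<Rightarrow> nat \<Rightarrow> nat \<Rightarrow> pt \<Rightarrow> complex poly" where
  "E d n k x = (\<Sum>m<d. smult (snd x ((k + 1) mod n) m - snd x k m)
                         (\<Prod>j\<in>{..<d} - {m}. [:- snd x k j, 1:]))
            - ((\<Prod>m<d. [:- snd x k m, 1:]) - monic_poly d (fst x))"

lemma Pd_n_iff: "x \<in> Pd_n d n \<longleftrightarrow> (\<forall>i\<ge>d. fst x i = 0) \<and> (\<forall>k m. (n \<le> k \<or> d \<le> m) \<longrightarrow> snd x k m = 0)
   \<and> (\<forall>k<n. E d n k x = 0)"
  by (cases x) (simp add: Pd_n_def E_def)

definition HP :: "nat \<Rightarrow> (pt \<Rightarrow> complex poly) \<Rightarrow> nat \<Rightarrow> bool" where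
  "HP d P w \<longleftrightarrow> (\<forall>x j. w < j \<longrightarrow> coeff (P x) j = 0) \<and>
      (\<forall>t x j. coeff (P (sc d t x)) j = t ^ (w - j) * coeff (P x) j)"

definition CP :: "(pt \<Rightarrow> complex poly) \<Rightarrow> bool" where
  "CP P \<longleftrightarrow> (\<forall>j. (\<lambda>x. coeff (P x) j) \<in> AA)"

lemma HPD1: "HP d P w \<Longrightarrow> w < j \<Longrightarrow> coeff (P x) j = 0"
  unfolding HP_def by blast

lemma HPD2: "HP d P w \<Longrightarrow> coeff (P (sc d t x)) j = t ^ (w - j) * coeff (P x) j"
  unfolding HP_def by blast

lemma HP_add: "HP d P w \<Longrightarrow> HP d Q w \<Longrightarrow> HP d (\<lambda>x. P x + Q x) w"
  by (auto simp: HP_def algebra_simps)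

lemma HP_diff: "HP d P w \<Longrightarrow> HP d Q w \<Longrightarrow> HP d (\<lambda>x. P x - Q x) w"
  by (auto simp: HP_def algebra_simps)

lemma HP_zero: "HP d (\<lambda>x. 0) w"
  by (auto simp: HP_def)

lemma HP_one: "HP d (\<lambda>x. 1) 0"
  by (auto simp: HP_def coeff_1)

lemma HP_sum: "finite S \<Longrightarrow> (\<And>i. i \<in> S \<Longrightarrow> HP d (P i) w) \<Longrightarrow> HP d (\<lambda>x. \<Sum>i\<in>S. P i x) w"
  by (induction S rule: finite_induct) (auto intro: HP_add HP_zero)

lemma HP_mult:
  assumes P: "HP d P w1" and Q: "HP d Q w2"
  shows "HP d (\<lambda>x. P x * Q x) (w1 + w2)"
  unfolding HP_def
proof (intro conjI allI impI)
  fix x j assume j: "w1 + w2 < j"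
  have "coeff (P x) i * coeff (Q x) (j - i) = 0" if "i \<le> j" for i
  proof (cases "w1 < i")
    case True then show ?thesis using HPD1[OF P] by simp
  next
    case False then have "w2 < j - i" using j that by linarith
    then show ?thesis using HPD1[OF Q] by simp
  qed
  then show "coeff (P x * Q x) j = 0" unfolding coeff_mult by (intro sum.neutral) force
next
  fix t x j
  have "coeff (P (sc d t x)) i * coeff (Q (sc d t x)) (j - i)
      = t ^ (w1 + w2 - j) * (coeff (P x) i * coeff (Q x) (j - i))" if "i \<le> j" for i
  proof (cases "i \<le> w1 \<and> j - i \<le> w2")
    case True
    then have "w1 - i + (w2 - (j - i)) = w1 + w2 - j" using that by linarith
    then have "t ^ (w1 - i) * t ^ (w2 - (j - i)) = t ^ (w1 + w2 - j)" by (metis power_add)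
    then show ?thesis unfolding HPD2[OF P] HPD2[OF Q] by (simp add: algebra_simps)
  next
    case False
    then have "coeff (P x) i * coeff (Q x) (j - i) = 0" using HPD1[OF P, of i x] HPD1[OF Q, of "j - i" x] by (auto simp: not_le)
    moreover have "coeff (P (sc d t x)) i * coeff (Q (sc d t x)) (j - i) = 0"
      using False HPD1[OF P, of i "sc d t x"] HPD1[OF Q, of "j - i" "sc d t x"] by (auto simp: not_le)
    ultimately show ?thesis by (metis mult_zero_right)
  qed
  then show "coeff (P (sc d t x) * Q (sc d t x)) j = t ^ (w1 + w2 - j) * coeff (P x * Q x) j"
    by (simp add: coeff_mult sum_distrib_left)
qed

lemma HP_prod: "finite S \<Longrightarrow> (\<And>i. i \<in> S \<Longrightarrow> HP d (P i) (w i)) \<Longrightarrow> HP d (\<lambda>x. \<Prod>i\<in>S. P i x) (\<Sum>i\<in>S. w i)"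
proof (induction S rule: finite_induct)
  case empty then show ?case using HP_one by simp
next
  case (insert a F)
  then show ?case using HP_mult[of d "P a" "w a" "\<lambda>x. \<Prod>i\<in>F. P i x" "\<Sum>i\<in>F. w i"] by simp
qed

lemma HP_smult:
  assumes P: "HP d P w" and c: "\<And>t x. c (sc d t x) = t * c x"
  shows "HP d (\<lambda>x. smult (c x) (P x)) (Suc w)"
  unfolding HP_def
proof (intro conjI allI impI)
  fix x j assume "Suc w < j" then show "coeff (smult (c x) (P x)) j = 0" using HPD1[OF P] by simp
next
  fix t x j
  show "coeff (smult (c (sc d t x)) (P (sc d t x))) j = t ^ (Suc w - j) * coeff (smult (c x) (P x)) j"
  proof (cases "j \<le> w")
    case True then have "Suc w - j = Suc (w - j)" by simp
    then show ?thesis using HPD2[OF P] c by (simp add: algebra_simps)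
  next
    case False then show ?thesis using HPD1[OF P] by simp
  qed
qed

lemma HP_lin: "HP d (\<lambda>x. [:- snd x k j, 1:]) 1"
  unfolding HP_def
proof (intro conjI allI impI)
  fix x and i :: nat assume "1 < i" then show "coeff [:- snd x k j, 1:] i = 0"
    by (cases i; cases "i - 1") auto
next
  fix t x and i :: nat
  show "coeff [:- snd (sc d t x) k j, 1:] i = t ^ (1 - i) * coeff [:- snd x k j, 1:] i"
    by (cases i; cases "i - 1") (auto simp: sc_def)
qed

lemma coeff_monic: "coeff (monic_poly d a) j = (if j = d then 1 else if j < d then a j else 0)"
  unfolding monic_poly_def by (auto simp: coeff_sum coeff_monom)

lemma HP_monic: "HP d (\<lambda>x. monic_poly d (fst x)) d"
  by (auto simp: HP_def coeff_monic sc_def)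

lemma HP_E:
  assumes "d \<ge> 1"
  shows "HP d (E d n k) d"
proof -
  have 1: "HP d (\<lambda>x. smult (snd x ((k + 1) mod n) m - snd x k m)
                         (\<Prod>j\<in>{..<d} - {m}. [:- snd x k j, 1:])) d" if "m \<in> {..<d}" for m
  proof -
    have "HP d (\<lambda>x. \<Prod>j\<in>{..<d} - {m}. [:- snd x k j, 1:]) (\<Sum>j\<in>{..<d} - {m}. 1)"
      by (rule HP_prod) (auto intro: HP_lin[simplified])
    then have "HP d (\<lambda>x. smult (snd x ((k + 1) mod n) m - snd x k m)
                         (\<Prod>j\<in>{..<d} - {m}. [:- snd x k j, 1:])) (Suc (\<Sum>j\<in>{..<d} - {m}. 1))"
      by (rule HP_smult) (auto simp: sc_def algebra_simps)
    moreover have "Suc (\<Sum>j\<in>{..<d} - {m}. 1) = d" using that assms by simp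
    ultimately show ?thesis by simp
  qed
  have 2: "HP d (\<lambda>x. \<Prod>m<d. [:- snd x k m, 1:]) d"
    using HP_prod[of "{..<d}" d "\<lambda>m x. [:- snd x k m, 1:]" "\<lambda>_. 1"] HP_lin by simp
  show ?thesis unfolding E_def[abs_def]
    by (intro HP_diff HP_sum 1 2 HP_monic) auto
qed

lemma CP_add: "CP P \<Longrightarrow> CP Q \<Longrightarrow> CP (\<lambda>x. P x + Q x)"
  by (auto simp: CP_def intro: pf_add)

lemma CP_diff: "CP P \<Longrightarrow> CP Q \<Longrightarrow> CP (\<lambda>x. P x - Q x)"
  by (auto simp: CP_def intro: pf_diff)

lemma CP_zero: "CP (\<lambda>x. 0)"
  using pf_const[of 0] by (auto simp: CP_def)

lemma CP_one: "CP (\<lambda>x. 1)"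
  using pf_const[of 0] pf_const[of 1] by (auto simp: CP_def coeff_1)

lemma CP_mult: "CP P \<Longrightarrow> CP Q \<Longrightarrow> CP (\<lambda>x. P x * Q x)"
  unfolding CP_def coeff_mult by (auto intro!: pf_sum pf_mult)

lemma CP_sum: "finite S \<Longrightarrow> (\<And>i. i \<in> S \<Longrightarrow> CP (P i)) \<Longrightarrow> CP (\<lambda>x. \<Sum>i\<in>S. P i x)"
  by (induction S rule: finite_induct) (auto intro: CP_add CP_zero)

lemma CP_prod: "finite S \<Longrightarrow> (\<And>i. i \<in> S \<Longrightarrow> CP (P i)) \<Longrightarrow> CP (\<lambda>x. \<Prod>i\<in>S. P i x)"
  by (induction S rule: finite_induct) (auto intro: CP_mult CP_one)

lemma CP_smult: "CP P \<Longrightarrow> c \<in> AA \<Longrightarrow> CP (\<lambda>x. smult (c x) (P x))"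
  by (auto simp: CP_def intro: pf_mult)

lemma CP_lin: "CP (\<lambda>x. [:- snd x k j, 1:])"
  unfolding CP_def
proof
  fix i :: nat
  show "(\<lambda>x. coeff [:- snd x k j, 1:] i) \<in> AA"
  proof (cases i)
    case 0
    have "(\<lambda>x. (-1) * val x (Inr (k,j))) \<in> AA" by (intro pf_cmult pf_val)
    then show ?thesis using 0 by simp
  next
    case (Suc i') then show ?thesis by (cases i') (auto intro: pf_const)
  qed
qed

lemma CP_monic: "CP (\<lambda>x. monic_poly d (fst x))"
  unfolding CP_def coeff_monic
proof
  fix j :: nat
  have "(\<lambda>x. val x (Inl j)) \<in> AA" by (rule pf_val)
  then show "(\<lambda>x. if j = d then 1 else if j < d then fst x j else 0) \<in> AA"
    by (cases "j = d"; cases "j < d") (auto intro: pf_const)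
qed

lemma CP_E: "CP (E d n k)"
  unfolding E_def[abs_def]
proof (intro CP_diff CP_sum CP_smult CP_prod CP_lin CP_monic)
  fix m
  have "(\<lambda>x. val x (Inr ((k + 1) mod n, m)) - val x (Inr (k, m))) \<in> AA"
    by (intro pf_diff pf_val)
  then show "(\<lambda>x. snd x ((k + 1) mod n) m - snd x k m) \<in> AA" by simp
qed auto

definition e :: "nat \<Rightarrow> nat \<Rightarrow> nat \<Rightarrow> nat \<Rightarrow> pt \<Rightarrow> complex" where
  "e d n k j x = coeff (E d n k x) j"

lemma pf_e: "e d n k j \<in> AA"
  using CP_E unfolding CP_def e_def[abs_def] by blast

lemma e_sc: "d \<ge> 1 \<Longrightarrow> e d n k j (sc d t x) = t ^ (d - j) * e d n k j x"
  using HP_E unfolding HP_def e_def by blast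

lemma E_zero_iff: "d \<ge> 1 \<Longrightarrow> E d n k x = 0 \<longleftrightarrow> (\<forall>j\<le>d. e d n k j x = 0)"
proof -
  assume d: "d \<ge> 1"
  have hi: "\<forall>j>d. coeff (E d n k x) j = 0" using HP_E[OF d] unfolding HP_def by blast
  show ?thesis
  proof
    assume "\<forall>j\<le>d. e d n k j x = 0"
    then have "\<forall>j. coeff (E d n k x) j = 0" using hi unfolding e_def by (meson not_le)
    then show "E d n k x = 0" by (simp add: poly_eq_iff)
  qed (auto simp: e_def)
qed

definition isId :: "(pt \<Rightarrow> complex) set \<Rightarrow> bool" where
  "isId K \<longleftrightarrow> K \<subseteq> AA \<and> (\<lambda>_. 0) \<in> K \<and> (\<forall>f\<in>K. \<forall>g\<in>K. (\<lambda>x. f x + g x) \<in> K)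
     \<and> (\<forall>f\<in>K. \<forall>g\<in>AA. (\<lambda>x. g x * f x) \<in> K)"

lemma id_AA: "isId K \<Longrightarrow> f \<in> K \<Longrightarrow> f \<in> AA" by (auto simp: isId_def)
lemma id_zero: "isId K \<Longrightarrow> (\<lambda>_. 0) \<in> K" by (auto simp: isId_def)
lemma id_add: "isId K \<Longrightarrow> f \<in> K \<Longrightarrow> g \<in> K \<Longrightarrow> (\<lambda>x. f x + g x) \<in> K" by (auto simp: isId_def)
lemma id_mult: "isId K \<Longrightarrow> f \<in> K \<Longrightarrow> g \<in> AA \<Longrightarrow> (\<lambda>x. g x * f x) \<in> K" by (auto simp: isId_def)

lemma id_sub: "isId K \<Longrightarrow> f \<in> K \<Longrightarrow> g \<in> K \<Longrightarrow> (\<lambda>x. f x - g x) \<in> K"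
proof -
  assume K: "isId K" and f: "f \<in> K" and g: "g \<in> K"
  have "(\<lambda>x. (\<lambda>_. -1) x * g x) \<in> K" by (rule id_mult[OF K g pf_const])
  then have "(\<lambda>x. f x + (\<lambda>_. -1) x * g x) \<in> K" by (rule id_add[OF K f])
  then show ?thesis by simp
qed

lemma id_sum: assumes K: "isId K" shows "finite S \<Longrightarrow> (\<And>i. i \<in> S \<Longrightarrow> f i \<in> K) \<Longrightarrow> (\<lambda>x. \<Sum>i\<in>S. f i x) \<in> K"
proof (induction S rule: finite_induct)
  case empty then show ?case using id_zero[OF K] by simp
next
  case (insert a F)
  then have "(\<lambda>x. f a x + (\<Sum>i\<in>F. f i x)) \<in> K" by (intro id_add[OF K]) auto
  then show ?case using insert by simp
qed

lemma id_one: "isId K \<Longrightarrow> c \<noteq> 0 \<Longrightarrow> (\<lambda>_. c) \<in> K \<Longrightarrow> (\<lambda>_. 1) \<in> K"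
proof -
  assume K: "isId K" and c: "c \<noteq> 0" and h: "(\<lambda>_. c) \<in> K"
  have "(\<lambda>x. (\<lambda>_. 1 / c) x * (\<lambda>_. c) x) \<in> K" by (rule id_mult[OF K h pf_const])
  then show ?thesis using c by simp
qed

lemma ev_nth: "ev R x = (\<Sum>i<length R. fst (R ! i) * mon (snd (R ! i)) x)"
  unfolding ev_def by (simp add: sum_list_sum_nth atLeast0LessThan)

lemma infinite_fiber:
  fixes f :: "complex \<Rightarrow> 'b::countable"
  shows "\<exists>s. infinite {c. f c = s}"
proof (rule ccontr)
  assume "\<not> ?thesis"
  then have fin: "\<And>s. finite {c. f c = s}" by blast
  have "(UNIV :: complex set) = (\<Union>s. {c. f c = s})" by auto
  moreover have "countable (\<Union>s. {c. f c = s})"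
    by (intro countable_UN) (auto intro: countable_finite fin)
  ultimately show False using uncountable_UNIV_complex by simp
qed

lemma nullst:
  fixes gen :: "'i \<Rightarrow> pt \<Rightarrow> complex"
  assumes fin: "finite J" and gA: "\<And>j. j \<in> J \<Longrightarrow> gen j \<in> AA"
    and nz: "\<not> (\<exists>x. \<forall>j\<in>J. gen j x = 0)"
  shows "\<exists>q. (\<forall>j\<in>J. q j \<in> AA) \<and> (\<forall>x. (\<Sum>j\<in>J. q j x * gen j x) = 1)"
proof (rule ccontr)
  assume H: "\<not> ?thesis"
  define I0 where "I0 = {f. \<exists>q. (\<forall>j\<in>J. q j \<in> AA) \<and> f = (\<lambda>x. \<Sum>j\<in>J. q j x * gen j x)}"
  have I0: "isId I0" unfolding isId_def
  proof (intro conjI ballI subsetI)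
    fix f assume "f \<in> I0"
    then obtain q where "\<forall>j\<in>J. q j \<in> AA" "f = (\<lambda>x. \<Sum>j\<in>J. q j x * gen j x)"
      unfolding I0_def by blast
    then show "f \<in> AA" using fin gA by (auto intro!: pf_sum pf_mult)
  next
    show "(\<lambda>_. 0) \<in> I0" unfolding I0_def
      by (intro CollectI exI[of _ "\<lambda>_ _. 0"]) (auto intro: pf_const)
  next
    fix f g assume "f \<in> I0" "g \<in> I0"
    then obtain q1 q2 where q: "\<forall>j\<in>J. q1 j \<in> AA" "f = (\<lambda>x. \<Sum>j\<in>J. q1 j x * gen j x)"
      "\<forall>j\<in>J. q2 j \<in> AA" "g = (\<lambda>x. \<Sum>j\<in>J. q2 j x * gen j x)"
      unfolding I0_def by blast
    show "(\<lambda>x. f x + g x) \<in> I0" unfolding I0_def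
      by (intro CollectI exI[of _ "\<lambda>j x. q1 j x + q2 j x"])
         (use q in \<open>auto intro: pf_add simp: sum.distrib algebra_simps\<close>)
  next
    fix f g assume "f \<in> I0" "g \<in> AA"
    then obtain q where q: "\<forall>j\<in>J. q j \<in> AA" "f = (\<lambda>x. \<Sum>j\<in>J. q j x * gen j x)"
      unfolding I0_def by blast
    show "(\<lambda>x. g x * f x) \<in> I0" unfolding I0_def
      by (intro CollectI exI[of _ "\<lambda>j x. g x * q j x"])
         (use q \<open>g \<in> AA\<close> in \<open>auto intro: pf_mult simp: sum_distrib_left algebra_simps\<close>)
  qed
  have gI: "gen j \<in> I0" if j: "j \<in> J" for j
  proof -
    have "(\<lambda>x. \<Sum>i\<in>J. (\<lambda>x. if i = j then 1 else 0) x * gen i x) = gen j"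
    proof
      fix x
      have "(\<Sum>i\<in>J. (\<lambda>x. if i = j then 1 else 0) x * gen i x) = (\<Sum>i\<in>J. if i = j then gen i x else 0)"
        by (rule sum.cong) auto
      then show "(\<Sum>i\<in>J. (\<lambda>x. if i = j then 1 else 0) x * gen i x) = gen j x"
        using j fin by simp
    qed
    then show ?thesis unfolding I0_def
      by (intro CollectI exI[of _ "\<lambda>i x. if i = j then 1 else 0"]) (auto intro: pf_const)
  qed
  have one: "(\<lambda>_. 1) \<notin> I0"
  proof
    assume "(\<lambda>_. 1) \<in> I0"
    then obtain q where q: "\<forall>j\<in>J. q j \<in> AA" "(\<lambda>_. 1) = (\<lambda>x. \<Sum>j\<in>J. q j x * gen j x)"
      unfolding I0_def by blast
    then have "\<forall>x. (\<Sum>j\<in>J. q j x * gen j x) = 1" by (metis)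
    then show False using H q(1) by blast
  qed
  define Sf where "Sf = {K. isId K \<and> I0 \<subseteq> K \<and> (\<lambda>_. 1) \<notin> K}"
  have I0S: "I0 \<in> Sf" using I0 one unfolding Sf_def by auto
  have "\<forall>C\<in>chains Sf. \<exists>U\<in>Sf. \<forall>X\<in>C. X \<subseteq> U"
  proof
    fix C assume C: "C \<in> chains Sf"
    show "\<exists>U\<in>Sf. \<forall>X\<in>C. X \<subseteq> U"
    proof (cases "C = {}")
      case True then show ?thesis using I0S by auto
    next
      case False
      have CS: "C \<subseteq> Sf" and ch: "\<And>X Y. X \<in> C \<Longrightarrow> Y \<in> C \<Longrightarrow> X \<subseteq> Y \<or> Y \<subseteq> X"
        using C unfolding chains_def chain_subset_def by auto
      have "isId (\<Union>C)" unfolding isId_def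
      proof (intro conjI ballI subsetI)
        fix f assume "f \<in> \<Union>C" then show "f \<in> AA" using CS unfolding Sf_def isId_def by blast
      next
        obtain X where "X \<in> C" using False by auto
        then show "(\<lambda>_. 0) \<in> \<Union>C" using CS unfolding Sf_def isId_def by blast
      next
        fix f g assume "f \<in> \<Union>C" "g \<in> \<Union>C"
        then obtain X Y where XY: "X \<in> C" "Y \<in> C" "f \<in> X" "g \<in> Y" by auto
        then consider "X \<subseteq> Y" | "Y \<subseteq> X" using ch by blast
        then show "(\<lambda>x. f x + g x) \<in> \<Union>C"
        proof cases
          case 1 then have "(\<lambda>x. f x + g x) \<in> Y" using XY CS unfolding Sf_def isId_def by blast
          then show ?thesis using XY by blast
        next
          case 2 then have "(\<lambda>x. f x + g x) \<in> X" using XY CS unfolding Sf_def isId_def by blast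
          then show ?thesis using XY by blast
        qed
      next
        fix f g assume "f \<in> \<Union>C" "g \<in> AA"
        then obtain X where "X \<in> C" "f \<in> X" by auto
        then have "(\<lambda>x. g x * f x) \<in> X" using CS \<open>g \<in> AA\<close> unfolding Sf_def isId_def by blast
        then show "(\<lambda>x. g x * f x) \<in> \<Union>C" using \<open>X \<in> C\<close> by blast
      qed
      moreover have "I0 \<subseteq> \<Union>C"
      proof -
        obtain X where "X \<in> C" using False by auto
        then show ?thesis using CS unfolding Sf_def by blast
      qed
      moreover have "(\<lambda>_. 1) \<notin> \<Union>C" using CS unfolding Sf_def by blast
      ultimately show ?thesis unfolding Sf_def by (intro bexI[of _ "\<Union>C"]) auto
    qed
  qed
  from Zorn_Lemma2[OF this] obtain M where MS: "M \<in> Sf" and Mmax: "\<forall>X\<in>Sf. M \<subseteq> X \<longrightarrow> X = M"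
    by blast
  have M: "isId M" and I0M: "I0 \<subseteq> M" and oneM: "(\<lambda>_. 1) \<notin> M" using MS unfolding Sf_def by auto
  have inv: "\<exists>u\<in>AA. \<exists>m\<in>M. \<forall>x. m x + u x * g x = 1" if g: "g \<in> AA" "g \<notin> M" for g
  proof -
    define K where "K = {f. \<exists>m\<in>M. \<exists>u\<in>AA. f = (\<lambda>x. m x + u x * g x)}"
    have K: "isId K" unfolding isId_def
    proof (intro conjI ballI subsetI)
      fix f assume "f \<in> K"
      then show "f \<in> AA" unfolding K_def using M g by (auto intro!: pf_add pf_mult dest: id_AA)
    next
      show "(\<lambda>_. 0) \<in> K" unfolding K_def using id_zero[OF M] pf_const[of 0 total_coords]
        by (intro CollectI bexI[of _ "\<lambda>_. 0"]) auto
    next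
      fix f1 f2 assume "f1 \<in> K" "f2 \<in> K"
      then obtain m1 u1 m2 u2 where h: "m1 \<in> M" "u1 \<in> AA" "f1 = (\<lambda>x. m1 x + u1 x * g x)"
        "m2 \<in> M" "u2 \<in> AA" "f2 = (\<lambda>x. m2 x + u2 x * g x)" unfolding K_def by blast
      have "(\<lambda>x. f1 x + f2 x) = (\<lambda>x. (\<lambda>x. m1 x + m2 x) x + (\<lambda>x. u1 x + u2 x) x * g x)"
        using h by (auto simp: algebra_simps)
      moreover have "(\<lambda>x. m1 x + m2 x) \<in> M" using h M by (intro id_add) auto
      moreover have "(\<lambda>x. u1 x + u2 x) \<in> AA" using h by (intro pf_add) auto
      ultimately show "(\<lambda>x. f1 x + f2 x) \<in> K" unfolding K_def
        by (intro CollectI bexI[of _ "\<lambda>x. m1 x + m2 x"] bexI[of _ "\<lambda>x. u1 x + u2 x"]) auto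
    next
      fix f h assume "f \<in> K" "h \<in> AA"
      then obtain m u where mu: "m \<in> M" "u \<in> AA" "f = (\<lambda>x. m x + u x * g x)" unfolding K_def by blast
      have "(\<lambda>x. h x * f x) = (\<lambda>x. (\<lambda>x. h x * m x) x + (\<lambda>x. h x * u x) x * g x)"
        using mu by (auto simp: algebra_simps)
      moreover have "(\<lambda>x. h x * m x) \<in> M" using mu M \<open>h \<in> AA\<close> by (intro id_mult) auto
      moreover have "(\<lambda>x. h x * u x) \<in> AA" using mu \<open>h \<in> AA\<close> by (intro pf_mult) auto
      ultimately show "(\<lambda>x. h x * f x) \<in> K" unfolding K_def
        by (intro CollectI bexI[of _ "\<lambda>x. h x * m x"] bexI[of _ "\<lambda>x. h x * u x"]) auto
    qed
    have MK: "M \<subseteq> K"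
    proof
      fix f assume "f \<in> M"
      then show "f \<in> K" unfolding K_def using pf_const[of 0 total_coords]
        by (intro CollectI bexI[of _ f] bexI[of _ "\<lambda>_. 0"]) auto
    qed
    have "g \<in> K"
    proof -
      show ?thesis unfolding K_def using id_zero[OF M] pf_const[of 1 total_coords]
        by (intro CollectI bexI[of _ "\<lambda>_. 0"] bexI[of _ "\<lambda>_. 1"]) auto
    qed
    then have "K \<noteq> M" using g by blast
    then have "K \<notin> Sf" using Mmax MK by blast
    then have "(\<lambda>_. 1) \<in> K" using K MK I0M unfolding Sf_def by blast
    then obtain m u where "m \<in> M" "u \<in> AA" "(\<lambda>_. 1) = (\<lambda>x. m x + u x * g x)" unfolding K_def by blast
    then show ?thesis by (metis)
  qed
  have prime: "g \<in> M" if fg: "f \<in> AA" "g \<in> AA" "(\<lambda>x. f x * g x) \<in> M" "f \<notin> M" for f g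
  proof -
    obtain u m where um: "u \<in> AA" "m \<in> M" "\<forall>x. m x + u x * f x = 1" using inv[OF fg(1,4)] by blast
    have "g = (\<lambda>x. g x * m x + u x * (f x * g x))"
    proof
      fix x have "g x = g x * (m x + u x * f x)" using um(3)[rule_format, of x] by simp
      then show "g x = g x * m x + u x * (f x * g x)" by (simp add: algebra_simps)
    qed
    moreover have "(\<lambda>x. g x * m x + u x * (f x * g x)) \<in> M"
      using id_add[OF M id_mult[OF M um(2) fg(2)] id_mult[OF M fg(3) um(1)]] by simp
    ultimately show ?thesis by metis
  qed
  have cM: "(\<lambda>_. c) \<notin> M" if "c \<noteq> 0" for c using id_one[OF M that] oneM by blast
  have lin: "\<exists>c. (\<lambda>x. y x - c) \<in> M" if "y \<in> AA" "P \<noteq> 0" "(\<lambda>x. poly P (y x)) \<in> M" for y P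
    using that
  proof (induction "degree P" arbitrary: P rule: less_induct)
    case less
    show ?case
    proof (cases "degree P = 0")
      case True
      then obtain a where Pa: "P = [:a:]" by (meson degree_eq_zeroE)
      then have "a \<noteq> 0" using less by auto
      moreover have "(\<lambda>x. poly P (y x)) = (\<lambda>_. a)" using Pa by simp
      ultimately show ?thesis using less cM by auto
    next
      case False
      then have "\<not> constant (poly P)" by (simp add: constant_degree)
      then obtain z0 where "poly P z0 = 0" using fundamental_theorem_of_algebra by blast
      then obtain Q where PQ: "P = [:- z0, 1:] * Q" by (meson dvdE poly_eq_0_iff_dvd)
      then have Q0: "Q \<noteq> 0" using less by auto
      have "degree P = degree [:- z0, 1:] + degree Q"
        unfolding PQ using Q0 by (intro degree_mult_eq) auto
      then have dQ: "degree Q < degree P" by simp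
      have "(\<lambda>x. poly P (y x)) = (\<lambda>x. (y x - z0) * poly Q (y x))" unfolding PQ by (simp add: algebra_simps)
      then have inM: "(\<lambda>x. (y x - z0) * poly Q (y x)) \<in> M" using less by simp
      show ?thesis
      proof (cases "(\<lambda>x. y x - z0) \<in> M")
        case True then show ?thesis by blast
      next
        case False
        have "(\<lambda>x. poly Q (y x)) \<in> M"
          by (rule prime[OF _ _ inM False]) (use less in \<open>auto intro: pf_diff pf_const pf_poly\<close>)
        then show ?thesis using less.hyps[OF dQ less.prems(1) Q0] by blast
      qed
    qed
  qed
  have alg: "\<exists>c. (\<lambda>x. val x v - c) \<in> M" for v
  proof (rule ccontr)
    assume nc: "\<not> ?thesis"
    have "\<forall>c. \<exists>u\<in>AA. \<exists>m\<in>M. \<forall>x. m x + u x * (val x v - c) = 1"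
    proof
      fix c
      have "(\<lambda>x. val x v - c) \<in> AA" by (intro pf_diff pf_val pf_const)
      then show "\<exists>u\<in>AA. \<exists>m\<in>M. \<forall>x. m x + u x * (val x v - c) = 1" using inv nc by blast
    qed
    then have "\<exists>u. \<forall>c. u c \<in> AA \<and> (\<exists>m\<in>M. \<forall>x. m x + u c x * (val x v - c) = 1)"
      by (metis (no_types))
    then obtain u where "\<forall>c. u c \<in> AA \<and> (\<exists>m\<in>M. \<forall>x. m x + u c x * (val x v - c) = 1)" by blast
    then have "\<exists>mm. \<forall>c. u c \<in> AA \<and> mm c \<in> M \<and> (\<forall>x. mm c x + u c x * (val x v - c) = 1)"
      by (metis (no_types))
    then obtain mm where um: "\<And>c. u c \<in> AA" "\<And>c. mm c \<in> M" "\<And>c x. mm c x + u c x * (val x v - c) = 1"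
      by blast
    have "\<forall>c. \<exists>R. u c = ev R" using rep um(1) by blast
    then obtain R where R: "\<And>c. u c = ev (R c)" by metis
    obtain s where "infinite {c. map snd (R c) = s}" using infinite_fiber[of "\<lambda>c. map snd (R c)"] by blast
    then obtain T where T: "finite T" "card T = Suc (length s)" "T \<subseteq> {c. map snd (R c) = s}"
      using infinite_arbitrarily_large by blast
    have uT: "u c x = (\<Sum>i<length s. fst (R c ! i) * mon (s ! i) x)" if "c \<in> T" for c x
    proof -
      have ms: "map snd (R c) = s" using T that by auto
      have len: "length (R c) = length s" using ms by (metis length_map)
      have nth: "snd (R c ! i) = s ! i" if "i < length s" for i
        using ms len that by (metis nth_map)
      have "u c x = (\<Sum>i<length (R c). fst (R c ! i) * mon (snd (R c ! i)) x)" unfolding R ev_nth ..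
      also have "\<dots> = (\<Sum>i<length s. fst (R c ! i) * mon (s ! i) x)"
        unfolding len by (rule sum.cong[OF refl]) (simp add: nth)
      finally show ?thesis .
    qed
    obtain l where l: "\<exists>c\<in>T. l c \<noteq> 0" "\<forall>i\<in>{..<length s}. (\<Sum>c\<in>T. l c * fst (R c ! i)) = 0"
      using lin_dep[of "{..<length s}" T "\<lambda>c i. fst (R c ! i)"] T by auto
    have lu: "(\<Sum>c\<in>T. l c * u c x) = 0" for x
    proof -
      have "(\<Sum>c\<in>T. l c * u c x) = (\<Sum>c\<in>T. \<Sum>i<length s. l c * fst (R c ! i) * mon (s ! i) x)"
        by (rule sum.cong) (auto simp: uT sum_distrib_left algebra_simps)
      also have "\<dots> = (\<Sum>i<length s. (\<Sum>c\<in>T. l c * fst (R c ! i)) * mon (s ! i) x)"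
        by (subst sum.swap) (simp add: sum_distrib_right)
      also have "\<dots> = 0" using l(2) by simp
      finally show ?thesis .
    qed
    define P where "P = (\<Sum>c\<in>T. smult (l c) (\<Prod>c'\<in>T - {c}. [:- c', 1:]))"
    have polyP: "poly P z = (\<Sum>c\<in>T. l c * (\<Prod>c'\<in>T - {c}. (z - c')))" for z
      unfolding P_def by (simp add: poly_sum poly_prod)
    obtain c0 where c0: "c0 \<in> T" "l c0 \<noteq> 0" using l(1) by blast
    have "poly P c0 = l c0 * (\<Prod>c'\<in>T - {c0}. (c0 - c'))"
    proof -
      have "(\<Sum>c\<in>T. l c * (\<Prod>c'\<in>T - {c}. (c0 - c'))) = l c0 * (\<Prod>c'\<in>T - {c0}. (c0 - c'))
           + (\<Sum>c\<in>T - {c0}. l c * (\<Prod>c'\<in>T - {c}. (c0 - c')))"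
        using c0 T by (simp add: sum.remove)
      moreover have "(\<Sum>c\<in>T - {c0}. l c * (\<Prod>c'\<in>T - {c}. (c0 - c'))) = 0"
      proof (rule sum.neutral, rule ballI)
        fix c assume "c \<in> T - {c0}"
        then have "c0 \<in> T - {c}" using c0 by auto
        then have "(\<Prod>c'\<in>T - {c}. (c0 - c')) = 0" using T by (intro prod_zero) auto
        then show "l c * (\<Prod>c'\<in>T - {c}. (c0 - c')) = 0" by simp
      qed
      ultimately show ?thesis using polyP by simp
    qed
    moreover have "(\<Prod>c'\<in>T - {c0}. (c0 - c')) \<noteq> 0" using T by (simp add: prod_zero_iff)
    ultimately have P0: "P \<noteq> 0" using c0 by auto
    have "(\<lambda>x. poly P (val x v)) = (\<lambda>x. \<Sum>c\<in>T. (l c * (\<Prod>c'\<in>T - {c}. (val x v - c'))) * mm c x)"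
    proof
      fix x
      define z where "z = val x v"
      have "(\<Sum>c\<in>T. l c * (\<Prod>c'\<in>T - {c}. (z - c'))) =
            (\<Sum>c\<in>T. l c * (\<Prod>c'\<in>T - {c}. (z - c')) * (mm c x + u c x * (z - c)))"
        using um(3) unfolding z_def by simp
      also have "\<dots> = (\<Sum>c\<in>T. (l c * (\<Prod>c'\<in>T - {c}. (z - c'))) * mm c x)
          + (\<Sum>c\<in>T. l c * u c x) * (\<Prod>c'\<in>T. (z - c'))"
      proof -
        have "l c * (\<Prod>c'\<in>T - {c}. (z - c')) * (mm c x + u c x * (z - c)) =
          (l c * (\<Prod>c'\<in>T - {c}. (z - c'))) * mm c x + l c * u c x * (\<Prod>c'\<in>T. (z - c'))"
          if "c \<in> T" for c
        proof -
          have "(\<Prod>c'\<in>T. (z - c')) = (z - c) * (\<Prod>c'\<in>T - {c}. (z - c'))"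
            using that T by (simp add: prod.remove)
          then show ?thesis by (simp only:) (simp add: algebra_simps)
        qed
        then show ?thesis by (simp add: sum.distrib sum_distrib_right)
      qed
      also have "\<dots> = (\<Sum>c\<in>T. (l c * (\<Prod>c'\<in>T - {c}. (z - c'))) * mm c x)" using lu by simp
      finally show "poly P (val x v) = (\<Sum>c\<in>T. (l c * (\<Prod>c'\<in>T - {c}. (val x v - c'))) * mm c x)"
        using polyP unfolding z_def by simp
    qed
    moreover have "(\<lambda>x. \<Sum>c\<in>T. (l c * (\<Prod>c'\<in>T - {c}. (val x v - c'))) * mm c x) \<in> M"
    proof (rule id_sum[OF M T(1)])
      fix c assume "c \<in> T"
      have "(\<lambda>x. l c * (\<Prod>c'\<in>T - {c}. (val x v - c'))) \<in> AA"
        using T by (intro pf_cmult pf_prod pf_diff pf_val pf_const) auto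
      then show "(\<lambda>x. (l c * (\<Prod>c'\<in>T - {c}. (val x v - c'))) * mm c x) \<in> M"
        using id_mult[OF M um(2)] by blast
    qed
    ultimately have "(\<lambda>x. poly P (val x v)) \<in> M" by simp
    then show False using lin[OF pf_val P0] nc by blast
  qed
  then obtain cv where cv: "\<And>v. (\<lambda>x. val x v - cv v) \<in> M" by metis
  define p where "p = ((\<lambda>i. cv (Inl i)), (\<lambda>k m. cv (Inr (k, m))))"
  have valp: "val p v = cv v" for v unfolding p_def by (cases v) (auto simp: val_def split: prod.split)
  have evM: "(\<lambda>x. f x - f p) \<in> M" if "f \<in> AA" for f
    using that
  proof (induction rule: polyfun.induct)
    case (pf_const c) then show ?case using id_zero[OF M] by simp
  next
    case (pf_coord f)
    then obtain v where "f = (\<lambda>x. val x v)" by (auto simp: total_coords_eq)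
    then show ?case using cv[of v] valp by simp
  next
    case (pf_add f g)
    have "(\<lambda>x. (f x - f p) + (g x - g p)) \<in> M" using pf_add M by (intro id_add) auto
    then show ?case by (simp add: algebra_simps)
  next
    case (pf_mult f g)
    have "(\<lambda>x. g x * (f x - f p) + (\<lambda>_. f p) x * (g x - g p)) \<in> M"
      using pf_mult M by (intro id_add id_mult pf_const) auto
    then show ?case by (simp add: algebra_simps)
  qed
  have "\<forall>j\<in>J. gen j p = 0"
  proof
    fix j assume j: "j \<in> J"
    have gM: "gen j \<in> M" using gI[OF j] I0M by blast
    have "(\<lambda>x. gen j x - (gen j x - gen j p)) \<in> M"
      by (rule id_sub[OF M gM evM[OF gA[OF j]]])
    then have "(\<lambda>_. gen j p) \<in> M" by simp
    then show "gen j p = 0" using cM by blast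
  qed
  then show False using nz by blast
qed

datatype gidx = GE nat nat | GA nat | GY

fun gen :: "nat \<Rightarrow> nat \<Rightarrow> var \<Rightarrow> gidx \<Rightarrow> pt \<Rightarrow> complex" where
  "gen d n y (GE k j) = e d n k j"
| "gen d n y (GA i) = (\<lambda>x. fst x i)"
| "gen d n y GY = (\<lambda>x. val x y - 1)"

fun wg :: "nat \<Rightarrow> gidx \<Rightarrow> nat" where
  "wg d (GE k j) = d - j" | "wg d (GA i) = d - i" | "wg d GY = 0"

definition J' :: "nat \<Rightarrow> nat \<Rightarrow> gidx set" where
  "J' d n = (\<lambda>(k, j). GE k j) ` ({..<n} \<times> {..d}) \<union> GA ` {..<d}"

lemma fin_J': "finite (J' d n)" by (simp add: J'_def)
lemma GY_notin: "GY \<notin> J' d n" by (auto simp: J'_def)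

lemma pf_gen: "gen d n y g \<in> AA"
proof (cases g)
  case (GE k j) then show ?thesis using pf_e by simp
next
  case (GA i) then show ?thesis using pf_val[of "Inl i"] by simp
next
  case GY then show ?thesis by (simp add: pf_diff pf_val pf_const)
qed

lemma wg_le: "wg d g \<le> d" by (cases g) auto

lemma gen_sc: "d \<ge> 1 \<Longrightarrow> g \<noteq> GY \<Longrightarrow> gen d n y g (sc d t x) = t ^ wg d g * gen d n y g x"
  apply (cases g)
    apply (simp add: e_sc)
   apply (simp add: sc_def)
  apply simp
  done

definition trunc :: "nat \<Rightarrow> nat \<Rightarrow> pt \<Rightarrow> pt" where
  "trunc d n x = ((\<lambda>i. if i < d then fst x i else 0), (\<lambda>k m. if k < n \<and> m < d then snd x k m else 0))"

lemma E_trunc: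
  assumes n1: "n \<ge> 1" and k: "k < n"
  shows "E d n k (trunc d n x) = E d n k x"
proof -
  have kn: "(k + 1) mod n < n" using n1 by simp
  have h1: "snd (trunc d n x) k m = snd x k m" if "m < d" for m using that k by (simp add: trunc_def)
  have h2: "snd (trunc d n x) ((k + 1) mod n) m = snd x ((k + 1) mod n) m" if "m < d" for m
    using that kn by (simp add: trunc_def del: mod_less_divisor)
  have h3: "fst (trunc d n x) i = fst x i" if "i < d" for i using that by (simp add: trunc_def)
  have A: "(\<Sum>m<d. smult (snd (trunc d n x) ((k + 1) mod n) m - snd (trunc d n x) k m)
                         (\<Prod>j\<in>{..<d} - {m}. [:- snd (trunc d n x) k j, 1:]))
         = (\<Sum>m<d. smult (snd x ((k + 1) mod n) m - snd x k m)
                         (\<Prod>j\<in>{..<d} - {m}. [:- snd x k j, 1:]))"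
  proof (rule sum.cong[OF refl])
    fix m assume m: "m \<in> {..<d}"
    have "(\<Prod>j\<in>{..<d} - {m}. [:- snd (trunc d n x) k j, 1:]) = (\<Prod>j\<in>{..<d} - {m}. [:- snd x k j, 1:])"
      by (rule prod.cong[OF refl]) (simp add: h1)
    then show "smult (snd (trunc d n x) ((k + 1) mod n) m - snd (trunc d n x) k m)
                         (\<Prod>j\<in>{..<d} - {m}. [:- snd (trunc d n x) k j, 1:]) =
               smult (snd x ((k + 1) mod n) m - snd x k m)
                         (\<Prod>j\<in>{..<d} - {m}. [:- snd x k j, 1:])"
      using m h1 h2 by simp
  qed
  have B: "(\<Prod>m<d. [:- snd (trunc d n x) k m, 1:]) = (\<Prod>m<d. [:- snd x k m, 1:])"
    by (rule prod.cong[OF refl]) (simp add: h1)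
  have C: "monic_poly d (fst (trunc d n x)) = monic_poly d (fst x)"
    unfolding monic_poly_def
    by (rule arg_cong[where f = "\<lambda>s. monom 1 d + s"], rule sum.cong[OF refl]) (simp add: h3)
  show ?thesis unfolding E_def A B C ..
qed

lemma nozero:
  assumes d1: "d \<ge> 1" and n1: "n \<ge> 1" and fib: "Pd0_n d n = {\<lambda>k m. 0}"
    and y: "y = Inr (k0, m0)" "k0 < n" "m0 < d"
  shows "\<not> (\<exists>x. \<forall>g\<in>insert GY (J' d n). gen d n y g x = 0)"
proof
  assume "\<exists>x. \<forall>g\<in>insert GY (J' d n). gen d n y g x = 0"
  then obtain x where x: "\<forall>g\<in>insert GY (J' d n). gen d n y g x = 0" by blast
  define p where "p = trunc d n x"
  have xa: "fst x i = 0" if "i < d" for i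
    using x[rule_format, of "GA i"] that by (auto simp: J'_def)
  have xe: "e d n k j x = 0" if "k < n" "j \<le> d" for k j
    using x[rule_format, of "GE k j"] that by (auto simp: J'_def)
  have xy: "snd x k0 m0 = 1" using x[rule_format, of GY] y by simp
  have fp: "fst p = (\<lambda>_. 0)" unfolding p_def trunc_def using xa by auto
  have "p \<in> Pd_n d n" unfolding Pd_n_iff
  proof (intro conjI allI impI)
    fix k assume k: "k < n"
    have "E d n k x = 0" using E_zero_iff[OF d1] xe k by blast
    then show "E d n k p = 0" unfolding p_def using E_trunc[OF n1 k] by simp
  qed (auto simp: p_def trunc_def)
  then have "((\<lambda>_. 0), snd p) \<in> Pd_n d n" using fp by (metis prod.collapse)
  then have "snd p \<in> Pd0_n d n" unfolding Pd0_n_def by simp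
  then have "snd p = (\<lambda>k m. 0)" using fib by simp
  then have "snd p k0 m0 = 0" by simp
  moreover have "snd p k0 m0 = 1" using xy y unfolding p_def trunc_def by simp
  ultimately show False by simp
qed

definition upd :: "nat \<Rightarrow> nat \<Rightarrow> pt \<Rightarrow> complex \<Rightarrow> pt" where
  "upd k0 m0 x s = (fst x, (snd x)(k0 := (snd x k0)(m0 := s)))"

lemma val_upd: "val (upd k0 m0 x s) v = (if v = Inr (k0, m0) then s else val x v)"
  by (cases v) (auto simp: upd_def val_def)

lemma line: "f \<in> AA \<Longrightarrow> \<exists>P. \<forall>s. f (upd k0 m0 x s) = poly P s"
proof (induction rule: polyfun.induct)
  case (pf_const c) then show ?case by (intro exI[of _ "[:c:]"]) simp
next
  case (pf_coord f)
  then obtain v where f: "f = (\<lambda>x. val x v)" by (auto simp: total_coords_eq)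
  show ?case
  proof (cases "v = Inr (k0, m0)")
    case True then show ?thesis using f by (intro exI[of _ "[:0, 1:]"]) (simp add: upd_def)
  next
    case False then show ?thesis using f by (intro exI[of _ "[:val x v:]"]) (simp add: val_upd)
  qed
next
  case (pf_add f g)
  then obtain P Q where "\<forall>s. f (upd k0 m0 x s) = poly P s" "\<forall>s. g (upd k0 m0 x s) = poly Q s" by blast
  then show ?case by (intro exI[of _ "P + Q"]) simp
next
  case (pf_mult f g)
  then obtain P Q where "\<forall>s. f (upd k0 m0 x s) = poly P s" "\<forall>s. g (upd k0 m0 x s) = poly Q s" by blast
  then show ?case by (intro exI[of _ "P * Q"]) simp
qed

definition Rg :: "nat \<Rightarrow> var \<Rightarrow> nat \<Rightarrow> (complex \<times> var list) list \<Rightarrow> gidx \<Rightarrow> pt \<Rightarrow> complex" where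
  "Rg d y N Rl g x = (\<Sum>p\<leftarrow>Rl. fst p * val x y ^ (N - wtl d (snd p) - wg d g) * mon (snd p) x)"

lemma pf_Rg: "Rg d y N Rl g \<in> AA"
  unfolding Rg_def[abs_def] by (intro pf_sum_list pf_mult pf_cmult pf_power pf_val pf_mon)

lemma pw_lemma:
  fixes s t :: complex
  assumes "s * t = 1" "a + b \<le> N"
  shows "s ^ N * (t ^ a * t ^ b) = s ^ (N - a - b)"
proof -
  have "s ^ N = s ^ (N - a - b) * s ^ (a + b)" using assms(2)
    by (metis add.commute diff_diff_left le_add_diff_inverse2 power_add)
  moreover have "s ^ (a + b) * (t ^ a * t ^ b) = 1"
    by (metis assms(1) power_add power_mult_distrib power_one)
  ultimately show ?thesis by (metis mult.assoc mult.right_neutral)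
qed

lemma hom:
  assumes d1: "d \<ge> 1" and n1: "n \<ge> 1" and fib: "Pd0_n d n = {\<lambda>k m. 0}"
    and y: "y = Inr (k0, m0)" "k0 < n" "m0 < d"
  shows "\<exists>R D. (\<forall>g\<in>J' d n. \<forall>p\<in>set (R g). wtl d (snd p) \<le> D) \<and>
     (\<forall>N. D + d \<le> N \<longrightarrow> (\<forall>x. val x y ^ N = (\<Sum>g\<in>J' d n. Rg d y N (R g) g x * gen d n y g x)))"
proof -
  let ?J = "insert GY (J' d n)"
  have "\<exists>q. (\<forall>g\<in>?J. q g \<in> AA) \<and> (\<forall>x. (\<Sum>g\<in>?J. q g x * gen d n y g x) = 1)"
    by (rule nullst) (use nozero[OF assms] fin_J' pf_gen in auto)
  then obtain q where q: "\<forall>g\<in>?J. q g \<in> AA" "\<And>x. (\<Sum>g\<in>?J. q g x * gen d n y g x) = 1" by blast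
  have "\<forall>g\<in>?J. \<exists>R. q g = ev R" using q(1) rep by blast
  from bchoice[OF this] obtain R where R: "\<forall>g\<in>?J. q g = ev (R g)" ..
  define D where "D = (\<Sum>g\<in>J' d n. \<Sum>p\<leftarrow>R g. wtl d (snd p))"
  have Dle: "wtl d (snd p) \<le> D" if g: "g \<in> J' d n" and p: "p \<in> set (R g)" for g p
  proof -
    have "wtl d (snd p) \<in> set (map (\<lambda>p. wtl d (snd p)) (R g))" using p by simp
    then have "wtl d (snd p) \<le> (\<Sum>p\<leftarrow>R g. wtl d (snd p))" by (rule member_le_sum_list) auto
    also have "\<dots> \<le> D" unfolding D_def using g fin_J' by (intro member_le_sum) auto
    finally show ?thesis .
  qed
  have main: "val x y ^ N = (\<Sum>g\<in>J' d n. Rg d y N (R g) g x * gen d n y g x)" if N: "D + d \<le> N" for N x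
  proof -
    define F where "F = (\<lambda>x. val x y ^ N - (\<Sum>g\<in>J' d n. Rg d y N (R g) g x * gen d n y g x))"
    have FA: "F \<in> AA" unfolding F_def
      by (intro pf_diff pf_power pf_val pf_sum pf_mult pf_Rg pf_gen fin_J')
    have nz: "F x = 0" if xy: "val x y \<noteq> 0" for x
    proof -
      define s where "s = val x y"
      define t where "t = 1 / s"
      have st: "s * t = 1" using xy unfolding s_def t_def by simp
      define x' where "x' = sc d t x"
      have vy: "val x' y = 1" unfolding x'_def val_sc using st y(1)
        by (simp add: wt_def s_def mult.commute)
      have "1 = (\<Sum>g\<in>?J. q g x' * gen d n y g x')" using q(2) by simp
      also have "\<dots> = (\<Sum>g\<in>J' d n. q g x' * gen d n y g x')" using vy GY_notin fin_J' by simp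
      finally have one: "1 = (\<Sum>g\<in>J' d n. q g x' * gen d n y g x')" .
      have trm: "s ^ N * (q g x' * gen d n y g x') = Rg d y N (R g) g x * gen d n y g x"
        if g: "g \<in> J' d n" for g
      proof -
        have gne: "g \<noteq> GY" using g GY_notin by auto
        have gsc: "gen d n y g x' = t ^ wg d g * gen d n y g x"
          unfolding x'_def using gen_sc[OF d1 gne] by simp
        have qx: "q g x' = (\<Sum>p\<leftarrow>R g. fst p * (t ^ wtl d (snd p) * mon (snd p) x))"
          using R g unfolding ev_def x'_def by (simp add: mon_sc)
        have "s ^ N * (q g x') * t ^ wg d g =
            (\<Sum>p\<leftarrow>R g. s ^ N * (fst p * (t ^ wtl d (snd p) * mon (snd p) x)) * t ^ wg d g)"
          unfolding qx by (simp add: sum_list_const_mult sum_list_mult_const)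
        also have "\<dots> = Rg d y N (R g) g x"
          unfolding Rg_def s_def[symmetric]
        proof (rule arg_cong[where f = sum_list], rule map_cong[OF refl])
          fix p assume p: "p \<in> set (R g)"
          have "wtl d (snd p) + wg d g \<le> N" using Dle[OF g p] wg_le[of d g] N by linarith
          then have "s ^ N * (t ^ wtl d (snd p) * t ^ wg d g) = s ^ (N - wtl d (snd p) - wg d g)"
            by (rule pw_lemma[OF st])
          moreover have "s ^ N * (fst p * (t ^ wtl d (snd p) * mon (snd p) x)) * t ^ wg d g =
              fst p * (s ^ N * (t ^ wtl d (snd p) * t ^ wg d g)) * mon (snd p) x"
            by (simp add: algebra_simps)
          ultimately show "s ^ N * (fst p * (t ^ wtl d (snd p) * mon (snd p) x)) * t ^ wg d g =
              fst p * s ^ (N - wtl d (snd p) - wg d g) * mon (snd p) x"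
            by simp
        qed
        finally show ?thesis using gsc by (simp add: mult.assoc)
      qed
      have "val x y ^ N = s ^ N * 1" unfolding s_def by simp
      also have "\<dots> = (\<Sum>g\<in>J' d n. s ^ N * (q g x' * gen d n y g x'))"
        by (subst one) (simp add: sum_distrib_left)
      also have "\<dots> = (\<Sum>g\<in>J' d n. Rg d y N (R g) g x * gen d n y g x)"
        by (rule sum.cong) (auto simp: trm)
      finally show ?thesis unfolding F_def by simp
    qed
    show ?thesis
    proof (cases "val x y = 0")
      case False then show ?thesis using nz[OF False] unfolding F_def by simp
    next
      case True
      obtain P where P: "\<And>s. F (upd k0 m0 x s) = poly P s" using line[OF FA] by blast
      have "poly P s = 0" if "s \<noteq> 0" for s
        using nz[of "upd k0 m0 x s"] that P[of s] y(1) by (simp add: upd_def)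
      then have sub: "{s. s \<noteq> 0} \<subseteq> {s. poly P s = 0}" by auto
      have inf: "infinite {s::complex. s \<noteq> 0}"
      proof
        assume "finite {s::complex. s \<noteq> 0}"
        then have "finite (insert 0 {s::complex. s \<noteq> 0})" by simp
        moreover have "insert 0 {s::complex. s \<noteq> 0} = UNIV" by auto
        ultimately show False using infinite_UNIV_char_0[where 'a=complex] by simp
      qed
      have "P = 0"
      proof (rule ccontr)
        assume P0: "P \<noteq> 0"
        from P0 have "finite {s. poly P s = 0}" by (rule poly_roots_finite)
        then have "finite {s::complex. s \<noteq> 0}" using sub by (rule finite_subset[rotated])
        then show False using inf by simp
      qed
      moreover have "upd k0 m0 x 0 = x" using True y(1) unfolding upd_def
        by (auto simp: prod_eq_iff fun_eq_iff)
      ultimately have "F x = 0" using P[of 0] by simp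
      then show ?thesis unfolding F_def by simp
    qed
  qed
  show ?thesis using Dle main by blast
qed

definition FinP :: "(pt \<Rightarrow> complex) set \<Rightarrow> pt set \<Rightarrow> (pt \<Rightarrow> complex) \<Rightarrow> bool" where
  "FinP G V f \<longleftrightarrow> (\<exists>h. (\<forall>g\<in>G. h g \<in> polyfun base_coords) \<and> (\<forall>x\<in>V. f x = (\<Sum>g\<in>G. h g (fst x) * g x)))"

lemma Fin_zeroV: "(\<And>x. x \<in> V \<Longrightarrow> f x = 0) \<Longrightarrow> FinP G V f"
  unfolding FinP_def by (intro exI[of _ "\<lambda>_ _. 0"]) (auto intro: pf_const)

lemma Fin_cong: "FinP G V f \<Longrightarrow> (\<And>x. x \<in> V \<Longrightarrow> f x = f' x) \<Longrightarrow> FinP G V f'"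
proof -
  assume a: "FinP G V f" and b: "\<And>x. x \<in> V \<Longrightarrow> f x = f' x"
  from a obtain h where h: "\<forall>g\<in>G. h g \<in> polyfun base_coords" "\<forall>x\<in>V. f x = (\<Sum>g\<in>G. h g (fst x) * g x)"
    unfolding FinP_def by blast
  show ?thesis unfolding FinP_def by (intro exI[of _ h]) (use h b in auto)
qed

lemma Fin_add: "FinP G V f \<Longrightarrow> FinP G V f' \<Longrightarrow> FinP G V (\<lambda>x. f x + f' x)"
proof -
  assume "FinP G V f" "FinP G V f'"
  then obtain h h' where h: "\<forall>g\<in>G. h g \<in> polyfun base_coords" "\<forall>x\<in>V. f x = (\<Sum>g\<in>G. h g (fst x) * g x)"
    and h': "\<forall>g\<in>G. h' g \<in> polyfun base_coords" "\<forall>x\<in>V. f' x = (\<Sum>g\<in>G. h' g (fst x) * g x)"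
    unfolding FinP_def by blast
  show ?thesis unfolding FinP_def
    by (intro exI[of _ "\<lambda>g a. h g a + h' g a"]) 
       (use h h' in \<open>auto intro: pf_add simp: sum.distrib algebra_simps\<close>)
qed

lemma Fin_sum: "finite S \<Longrightarrow> (\<And>i. i \<in> S \<Longrightarrow> FinP G V (f i)) \<Longrightarrow> FinP G V (\<lambda>x. \<Sum>i\<in>S. f i x)"
proof (induction S rule: finite_induct)
  case empty then show ?case by (simp add: Fin_zeroV)
next
  case (insert a F)
  then have "FinP G V (\<lambda>x. f a x + (\<Sum>i\<in>F. f i x))" by (intro Fin_add) auto
  then show ?case using insert by simp
qed

lemma Fin_sum_list: "(\<And>p. p \<in> set L \<Longrightarrow> FinP G V (f p)) \<Longrightarrow> FinP G V (\<lambda>x. \<Sum>p\<leftarrow>L. f p x)"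
proof (induction L)
  case Nil then show ?case by (simp add: Fin_zeroV)
next
  case (Cons a L)
  then have "FinP G V (\<lambda>x. f a x + (\<Sum>p\<leftarrow>L. f p x))" by (intro Fin_add) auto
  then show ?case by simp
qed

lemma Fin_mulbase: "FinP G V f \<Longrightarrow> b \<in> polyfun base_coords \<Longrightarrow> FinP G V (\<lambda>x. b (fst x) * f x)"
proof -
  assume "FinP G V f" and b: "b \<in> polyfun base_coords"
  then obtain h where h: "\<forall>g\<in>G. h g \<in> polyfun base_coords" "\<forall>x\<in>V. f x = (\<Sum>g\<in>G. h g (fst x) * g x)"
    unfolding FinP_def by blast
  show ?thesis unfolding FinP_def
    by (intro exI[of _ "\<lambda>g a. b a * h g a"])
       (use h b in \<open>auto intro: pf_mult simp: sum_distrib_left algebra_simps\<close>)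
qed

lemma Fin_G: "finite G \<Longrightarrow> g0 \<in> G \<Longrightarrow> FinP G V g0"
proof -
  assume G: "finite G" and g0: "g0 \<in> G"
  have "(\<Sum>g\<in>G. (\<lambda>a. if g = g0 then 1 else 0) (fst x) * g x) = g0 x" for x
  proof -
    have "(\<Sum>g\<in>G. (\<lambda>a. if g = g0 then 1 else 0) (fst x) * g x) = (\<Sum>g\<in>G. if g = g0 then g x else 0)"
      by (rule sum.cong) auto
    then show ?thesis using G g0 by simp
  qed
  then show ?thesis unfolding FinP_def
    by (intro exI[of _ "\<lambda>g a. if g = g0 then 1 else 0"]) (auto intro: pf_const)
qed

definition isz :: "var \<Rightarrow> bool" where "isz v = (case v of Inl _ \<Rightarrow> False | Inr _ \<Rightarrow> True)"

definition bm :: "var list \<Rightarrow> (nat \<Rightarrow> complex) \<Rightarrow> complex" where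
  "bm L a = (\<Prod>v\<leftarrow>L. (case v of Inl i \<Rightarrow> a i | Inr _ \<Rightarrow> 0))"

lemma pf_bm: "bm L \<in> polyfun base_coords"
  unfolding bm_def[abs_def]
proof (rule pf_prod_list)
  fix v show "(\<lambda>a. case v of Inl i \<Rightarrow> a i | Inr _ \<Rightarrow> 0) \<in> polyfun base_coords"
    by (cases v) (auto intro: pf_const pf_coord simp: base_coords_def)
qed

lemma mon_bm: "(\<forall>v\<in>set L. \<not> isz v) \<Longrightarrow> mon L x = bm L (fst x)"
proof (induction L)
  case Nil then show ?case by (simp add: mon_def bm_def)
next
  case (Cons v L)
  then obtain i where "v = Inl i" by (cases v) (auto simp: isz_def)
  then show ?case using Cons by (simp add: mon_def bm_def)
qed

lemma mon_split: "mon L x = mon (filter P L) x * mon (filter (\<lambda>v. \<not> P v) L) x"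
  by (induction L) (auto simp: mon_def algebra_simps)

lemma zs_le_wtl: "length (filter isz L) \<le> wtl d L"
  by (induction L) (auto simp: wtl_def wt_def isz_def split: sum.splits)

lemma mon_remove1: "y \<in> set L \<Longrightarrow> mon L x = val x y * mon (remove1 y L) x"
  by (induction L) (auto simp: mon_def algebra_simps)

lemma count_remove1: "count_list (remove1 y L) y = count_list L y - 1"
  by (induction L) auto

lemma remove_n: "N \<le> count_list L y \<Longrightarrow>
   \<exists>L'. (\<forall>x. mon L x = val x y ^ N * mon L' x) \<and> length L' + N = length L \<and> set L' \<subseteq> set L"
proof (induction N arbitrary: L)
  case 0 then show ?case by (intro exI[of _ L]) auto
next
  case (Suc N)
  then have yL: "y \<in> set L" by (metis count_list_0_iff not_less_eq_eq zero_le)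
  have "N \<le> count_list (remove1 y L) y" using Suc.prems by (simp add: count_remove1)
  from Suc.IH[OF this] obtain L' where L': "\<forall>x. mon (remove1 y L) x = val x y ^ N * mon L' x"
    "length L' + N = length (remove1 y L)" "set L' \<subseteq> set (remove1 y L)" by blast
  have "\<forall>x. mon L x = val x y ^ Suc N * mon L' x" using L'(1) mon_remove1[OF yL] by simp
  moreover have "length L' + Suc N = length L" using L'(2) yL
    by (simp add: length_remove1) (metis Suc_pred length_pos_if_in_set)
  moreover have "set L' \<subseteq> set L" using L'(3) set_remove1_subset by fastforce
  ultimately show ?case by blast
qed

lemma mon_replicate: "mon (replicate k y) x = val x y ^ k"
  by (induction k) (auto simp: mon_def)

lemma filt1: "filter isz (filter (\<lambda>v. \<not> isz v) L) = []"
  by (induction L) auto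

lemma filt2: "set L' \<subseteq> set Lz \<Longrightarrow> \<forall>v\<in>set Lz. isz v \<Longrightarrow> filter isz L' = L'"
  by (induction L') auto

lemma hard:
  assumes d1: "d \<ge> 1" and n1: "n \<ge> 1" and fib: "Pd0_n d n = {\<lambda>k m. 0}"
  shows "finite_projection (Pd_n d n)"
proof -
  define Rz where "Rz = (\<lambda>(k, m). Inr (k, m) :: var) ` ({..<n} \<times> {..<d})"
  have finRz: "finite Rz" unfolding Rz_def by simp
  have Rz_mem: "v \<in> Rz \<longleftrightarrow> (\<exists>k m. v = Inr (k, m) \<and> k < n \<and> m < d)" for v
    unfolding Rz_def by auto
  have "\<forall>y\<in>Rz. \<exists>R D. (\<forall>g\<in>J' d n. \<forall>p\<in>set (R g). wtl d (snd p) \<le> D) \<and>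
     (\<forall>N. D + d \<le> N \<longrightarrow> (\<forall>x. val x y ^ N = (\<Sum>g\<in>J' d n. Rg d y N (R g) g x * gen d n y g x)))"
  proof
    fix y assume "y \<in> Rz"
    then obtain k m where "y = Inr (k, m)" "k < n" "m < d" using Rz_mem by blast
    then show "\<exists>R D. (\<forall>g\<in>J' d n. \<forall>p\<in>set (R g). wtl d (snd p) \<le> D) \<and>
     (\<forall>N. D + d \<le> N \<longrightarrow> (\<forall>x. val x y ^ N = (\<Sum>g\<in>J' d n. Rg d y N (R g) g x * gen d n y g x)))"
      by (rule hom[OF d1 n1 fib])
  qed
  from bchoice[OF this] obtain RR where "\<forall>y\<in>Rz. \<exists>D. (\<forall>g\<in>J' d n. \<forall>p\<in>set (RR y g). wtl d (snd p) \<le> D) \<and>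
     (\<forall>N. D + d \<le> N \<longrightarrow> (\<forall>x. val x y ^ N = (\<Sum>g\<in>J' d n. Rg d y N (RR y g) g x * gen d n y g x)))"
    ..
  from bchoice[OF this] obtain DD where H: "\<forall>y\<in>Rz. (\<forall>g\<in>J' d n. \<forall>p\<in>set (RR y g). wtl d (snd p) \<le> DD y) \<and>
     (\<forall>N. DD y + d \<le> N \<longrightarrow> (\<forall>x. val x y ^ N = (\<Sum>g\<in>J' d n. Rg d y N (RR y g) g x * gen d n y g x)))"
    ..
  define N where "N = (\<Sum>y\<in>Rz. DD y) + d"
  have NY: "DD y + d \<le> N" if "y \<in> Rz" for y
  proof -
    have "DD y \<le> (\<Sum>y\<in>Rz. DD y)" using that finRz by (intro member_le_sum) auto
    then show ?thesis unfolding N_def by simp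
  qed
  have N1: "N \<ge> 1" unfolding N_def using d1 by simp
  define B where "B = (N - 1) * card Rz"
  define G where "G = (\<lambda>L. mon L) ` {L. set L \<subseteq> Rz \<and> length L \<le> B}"
  define V where "V = Pd_n d n"
  have finG: "finite G" unfolding G_def using finite_lists_length_le[OF finRz] by simp
  have GA: "G \<subseteq> AA" unfolding G_def using pf_mon by blast
  have red: "FinP G V (mon L)" for L
  proof (induction "length (filter isz L)" arbitrary: L rule: less_induct)
    case less
    define La where "La = filter (\<lambda>v. \<not> isz v) L"
    define Lz where "Lz = filter isz L"
    have msplit: "mon L x = bm La (fst x) * mon Lz x" for x
      using mon_split[of L x isz] mon_bm[of La x] unfolding La_def Lz_def by (simp add: mult.commute)
    have Lz_isz: "\<forall>v\<in>set Lz. isz v" unfolding Lz_def by simp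
    show ?case
    proof (cases "set Lz \<subseteq> Rz")
      case False
      then obtain v where v: "v \<in> set Lz" "v \<notin> Rz" by blast
      have "isz v" using Lz_isz v(1) by blast
      then obtain k m where km: "v = Inr (k, m)" by (cases v) (auto simp: isz_def)
      then have "\<not> (k < n \<and> m < d)" using v Rz_mem by blast
      then have "mon Lz x = 0" if "x \<in> V" for x
      proof -
        have "snd x k m = 0" using that \<open>\<not> (k < n \<and> m < d)\<close> unfolding V_def Pd_n_iff by auto
        then have "0 \<in> val x ` set Lz" using v(1) km by (metis image_eqI val_simps(2))
        then show ?thesis unfolding mon_def by (simp add: prod_list_zero_iff)
      qed
      then show ?thesis by (intro Fin_zeroV) (simp add: msplit)
    next
      case True
      show ?thesis
      proof (cases "length Lz \<le> B")
        case True
        then have "mon Lz \<in> G" unfolding G_def using \<open>set Lz \<subseteq> Rz\<close> by blast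
        then have "FinP G V (\<lambda>x. bm La (fst x) * mon Lz x)" by (intro Fin_mulbase Fin_G finG pf_bm)
        then show ?thesis by (rule Fin_cong) (simp add: msplit)
      next
        case False
        have "\<exists>y\<in>Rz. N \<le> count_list Lz y"
        proof (rule ccontr)
          assume "\<not> ?thesis"
          then have "\<And>y. y \<in> Rz \<Longrightarrow> count_list Lz y \<le> N - 1" by fastforce
          then have "sum (count_list Lz) Rz \<le> card Rz * (N - 1)" using sum_bounded_above[of Rz "count_list Lz" "N - 1"] by simp
          moreover have "sum (count_list Lz) Rz = length Lz" using sum_count_set[OF \<open>set Lz \<subseteq> Rz\<close> finRz] .
          ultimately show False using False unfolding B_def by (simp add: mult.commute)
        qed
        then obtain y where yR: "y \<in> Rz" and cy: "N \<le> count_list Lz y" by blast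
        from remove_n[OF cy] obtain L' where L': "\<forall>x. mon Lz x = val x y ^ N * mon L' x"
          "length L' + N = length Lz" "set L' \<subseteq> set Lz" by blast
        have Hyy: "(\<forall>g\<in>J' d n. \<forall>p\<in>set (RR y g). wtl d (snd p) \<le> DD y) \<and>
          (\<forall>N. DD y + d \<le> N \<longrightarrow> (\<forall>x. val x y ^ N = (\<Sum>g\<in>J' d n. Rg d y N (RR y g) g x * gen d n y g x)))"
          using H yR by (rule bspec)
        have Hy: "\<And>g p. g \<in> J' d n \<Longrightarrow> p \<in> set (RR y g) \<Longrightarrow> wtl d (snd p) \<le> DD y"
          using Hyy by blast
        have Hy2: "val x y ^ N = (\<Sum>g\<in>J' d n. Rg d y N (RR y g) g x * gen d n y g x)" for x
          using conjunct2[OF Hyy, rule_format, OF NY[OF yR]] by blast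
        define T where "T = (\<lambda>g x. Rg d y N (RR y g) g x * gen d n y g x * (mon La x * mon L' x))"
        have monLa: "mon La x = bm La (fst x)" for x using mon_bm[of La x] unfolding La_def by simp
        have eqT: "mon L x = (\<Sum>g\<in>J' d n. T g x)" for x
        proof -
          have "mon L x = mon La x * (val x y ^ N * mon L' x)"
            using msplit[of x] L'(1)[rule_format, of x] monLa[of x] by simp
          also have "\<dots> = val x y ^ N * (mon La x * mon L' x)" by (simp only: mult.left_commute)
          also have "\<dots> = (\<Sum>g\<in>J' d n. Rg d y N (RR y g) g x * gen d n y g x) * (mon La x * mon L' x)"
            by (subst Hy2[of x]) (rule refl)
          also have "\<dots> = (\<Sum>g\<in>J' d n. T g x)" unfolding T_def by (simp add: sum_distrib_right)
          finally show ?thesis .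
        qed
        have "FinP G V (\<lambda>x. \<Sum>g\<in>J' d n. T g x)"
        proof (rule Fin_sum[OF fin_J'])
          fix g assume g: "g \<in> J' d n"
          then consider k j where "g = GE k j" "k < n" "j \<le> d" | i where "g = GA i" "i < d"
            unfolding J'_def by auto
          then show "FinP G V (T g)"
          proof cases
            case 1
            have "T g x = 0" if "x \<in> V" for x
            proof -
              have "E d n k x = 0" using that 1 unfolding V_def Pd_n_iff by blast
              then have "e d n k j x = 0" unfolding e_def by simp
              then show ?thesis unfolding T_def using 1 by simp
            qed
            then show ?thesis by (rule Fin_zeroV)
          next
            case 2
            have wgi: "wg d g = d - i" using 2 by simp
            let ?ex = "\<lambda>p. N - wtl d (snd p) - wg d g"
            have Tg: "T g x = (\<Sum>p\<leftarrow>RR y g. (\<lambda>a. fst p * a i) (fst x) *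
                         mon (snd p @ replicate (?ex p) y @ La @ L') x)" for x
            proof -
              have "T g x = (\<Sum>p\<leftarrow>RR y g. fst p * val x y ^ ?ex p * mon (snd p) x * (fst x i * (mon La x * mon L' x)))"
                unfolding T_def Rg_def using 2 by (simp add: sum_list_mult_const[symmetric] mult.assoc)
              also have "\<dots> = (\<Sum>p\<leftarrow>RR y g. (\<lambda>a. fst p * a i) (fst x) *
                         mon (snd p @ replicate (?ex p) y @ La @ L') x)"
                by (rule arg_cong[where f = sum_list], rule map_cong[OF refl])
                   (simp add: mon_append mon_replicate algebra_simps)
              finally show ?thesis .
            qed
            have "FinP G V (\<lambda>x. \<Sum>p\<leftarrow>RR y g. (\<lambda>a. fst p * a i) (fst x) *
                         mon (snd p @ replicate (?ex p) y @ La @ L') x)"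
            proof (rule Fin_sum_list, rule Fin_mulbase)
              fix p assume p: "p \<in> set (RR y g)"
              have "(\<lambda>a. a i) \<in> polyfun base_coords" by (rule pf_coord) (simp add: base_coords_def)
              then show "(\<lambda>a. fst p * a i) \<in> polyfun base_coords" by (rule pf_cmult)
              have w: "wtl d (snd p) \<le> DD y" using Hy[OF g p] .
              have zsp: "length (filter isz (snd p)) \<le> wtl d (snd p)" by (rule zs_le_wtl)
              have yz: "isz y"
              proof -
                obtain k m where "y = Inr (k, m)" using yR Rz_mem[of y] by blast
                then show ?thesis by (simp add: isz_def)
              qed
              have Laz: "filter isz La = []" unfolding La_def by (rule filt1)
              have L'z: "filter isz L' = L'" using L'(3) Lz_isz by (rule filt2)
              have zL: "length (filter isz L) = length Lz" unfolding Lz_def by (rule refl)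
              have rz: "filter isz (replicate k y) = replicate k y" for k using yz by (induction k) auto
              have le1: "wtl d (snd p) + wg d g \<le> N" using w NY[OF yR] wg_le[of d g] by linarith
              have exN: "?ex p + wtl d (snd p) + wg d g = N" using le1 by linarith
              have wg1: "1 \<le> wg d g" using wgi 2 by simp
              have "length (filter isz (snd p @ replicate (?ex p) y @ La @ L'))
                  = length (filter isz (snd p)) + ?ex p + length L'"
                by (simp add: rz Laz L'z)
              also have "\<dots> < length (filter isz L)"
                using zsp exN wg1 L'(2) zL by linarith
              finally show "FinP G V (mon (snd p @ replicate (?ex p) y @ La @ L'))"
                by (rule less)
            qed
            then show ?thesis by (rule Fin_cong) (simp add: Tg)
          qed
        qed
        then show ?thesis by (rule Fin_cong) (simp add: eqT)
      qed
    qed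
  qed
  have all: "FinP G V f" if "f \<in> AA" for f
  proof -
    from rep[OF that] obtain R where R: "f = ev R" ..
    have "FinP G V (\<lambda>x. \<Sum>p\<leftarrow>R. fst p * mon (snd p) x)"
    proof (rule Fin_sum_list)
      fix p assume "p \<in> set R"
      have "FinP G V (\<lambda>x. (\<lambda>_. fst p) (fst x) * mon (snd p) x)" by (rule Fin_mulbase[OF red pf_const])
      then show "FinP G V (\<lambda>x. fst p * mon (snd p) x)" by simp
    qed
    then show ?thesis unfolding R ev_def .
  qed
  show ?thesis unfolding finite_projection_def
  proof (rule exI[of _ G], intro conjI ballI)
    show "finite G" by (rule finG)
    show "G \<subseteq> polyfun total_coords" by (rule GA)
    fix f assume "f \<in> polyfun total_coords"
    from all[OF this] show "\<exists>h. (\<forall>g\<in>G. h g \<in> polyfun base_coords) \<and>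
           (\<forall>x\<in>Pd_n d n. f x = (\<Sum>g\<in>G. h g (fst x) * g x))"
      unfolding FinP_def V_def .
  qed
qed

lemma sc_in: "d \<ge> 1 \<Longrightarrow> x \<in> Pd_n d n \<Longrightarrow> sc d t x \<in> Pd_n d n"
  unfolding Pd_n_iff
proof (intro conjI allI impI)
  assume d1: "d \<ge> 1" and x: "(\<forall>i\<ge>d. fst x i = 0) \<and> (\<forall>k m. n \<le> k \<or> d \<le> m \<longrightarrow> snd x k m = 0) \<and> (\<forall>k<n. E d n k x = 0)"
  fix k assume k: "k < n"
  have "\<forall>j\<le>d. e d n k j x = 0" using x k E_zero_iff[OF d1] by blast
  then have "\<forall>j\<le>d. e d n k j (sc d t x) = 0" using e_sc[OF d1] by simp
  then show "E d n k (sc d t x) = 0" using E_zero_iff[OF d1] by blast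
qed (auto simp: sc_def)

lemma zero_in: "(\<lambda>k m. 0) \<in> Pd0_n d n"
proof -
  have "E d n k ((\<lambda>_. 0), (\<lambda>k m. 0)) = 0" for k
    unfolding E_def monic_poly_def by (simp add: monom_altdef)
  then show ?thesis unfolding Pd0_n_def Pd_n_iff by simp
qed

lemma easy:
  assumes d1: "d \<ge> 1" and fp: "finite_projection (Pd_n d n)"
  shows "Pd0_n d n = {\<lambda>k m. 0}"
proof -
  have "z = (\<lambda>k m. 0)" if z: "z \<in> Pd0_n d n" for z
  proof (rule ccontr)
    assume "z \<noteq> (\<lambda>k m. 0)"
    then obtain k0 m0 where c: "z k0 m0 \<noteq> 0" by (meson ext)
    define c where "c = z k0 m0"
    define x0 where "x0 = ((\<lambda>_::nat. 0::complex), z)"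
    have x0: "x0 \<in> Pd_n d n" using z unfolding Pd0_n_def x0_def by simp
    obtain G where G: "finite G" "G \<subseteq> polyfun total_coords"
      "\<forall>f\<in>polyfun total_coords. \<exists>h. (\<forall>g\<in>G. h g \<in> polyfun base_coords) \<and>
           (\<forall>x\<in>Pd_n d n. f x = (\<Sum>g\<in>G. h g (fst x) * g x))"
      using fp unfolding finite_projection_def by blast
    define K where "K = card G"
    have "\<forall>j. \<exists>h. \<forall>x\<in>Pd_n d n. snd x k0 m0 ^ j = (\<Sum>g\<in>G. h g (fst x) * g x)"
    proof
      fix j
      have "(\<lambda>x. val x (Inr (k0, m0)) ^ j) \<in> AA" by (intro pf_power pf_val)
      then show "\<exists>h. \<forall>x\<in>Pd_n d n. snd x k0 m0 ^ j = (\<Sum>g\<in>G. h g (fst x) * g x)"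
        using G(3) by fastforce
    qed
    from choice[OF this] obtain Hh where Hh0: "\<forall>j. \<forall>x\<in>Pd_n d n. snd x k0 m0 ^ j = (\<Sum>g\<in>G. Hh j g (fst x) * g x)"
      ..
    have Hh: "\<And>j x. x \<in> Pd_n d n \<Longrightarrow> snd x k0 m0 ^ j = (\<Sum>g\<in>G. Hh j g (fst x) * g x)"
      using Hh0 by blast
    obtain l where l: "\<exists>j\<in>{..K}. l j \<noteq> 0" "\<forall>g\<in>G. (\<Sum>j\<in>{..K}. l j * Hh j g (\<lambda>_. 0)) = 0"
      using lin_dep[of G "{..K}" "\<lambda>j g. Hh j g (\<lambda>_. 0)"] G(1) unfolding K_def by auto
    define P where "P = (\<Sum>j\<in>{..K}. monom (l j * c ^ j) j)"
    have "poly P t = 0" for t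
    proof -
      have xt: "sc d t x0 \<in> Pd_n d n" by (rule sc_in[OF d1 x0])
      have fx: "fst (sc d t x0) = (\<lambda>_. 0)" unfolding sc_def x0_def by simp
      have "poly P t = (\<Sum>j\<in>{..K}. l j * (snd (sc d t x0) k0 m0) ^ j)"
        unfolding P_def by (simp add: poly_sum poly_monom sc_def x0_def c_def power_mult_distrib algebra_simps)
      also have "\<dots> = (\<Sum>j\<in>{..K}. \<Sum>g\<in>G. l j * Hh j g (\<lambda>_. 0) * g (sc d t x0))"
        using Hh[OF xt] fx by (simp add: sum_distrib_left algebra_simps)
      also have "\<dots> = (\<Sum>g\<in>G. (\<Sum>j\<in>{..K}. l j * Hh j g (\<lambda>_. 0)) * g (sc d t x0))"
        by (subst sum.swap) (simp add: sum_distrib_right)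
      also have "\<dots> = 0" using l(2) by simp
      finally show ?thesis .
    qed
    then have "poly P = poly 0" by auto
    then have P0: "P = 0" using poly_eq_poly_eq_iff by blast
    obtain j where j: "j \<in> {..K}" "l j \<noteq> 0" using l(1) by blast
    have "coeff P j = l j * c ^ j" unfolding P_def using j(1) by (simp add: coeff_sum coeff_monom)
    then show False using P0 j c unfolding c_def by simp
  qed
  then show ?thesis using zero_in by blast
qed

theorem lemma4p3:
  fixes d n :: nat
  assumes "d \<ge> 1" and "n \<ge> 1"
  shows "finite_projection (Pd_n d n) \<longleftrightarrow> Pd0_n d n = {\<lambda>k m. 0}"
  using easy hard assms by blast

end
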